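(* Let $s,t,\ell,m$ be integers with $1\le t\le \ell \le m$ and $1 \le s \le t$. Then $\mathfrak{w}_{\ell}^{(s)}(t;\ell,m)=0$ if $s \ne t$, while $$\mathfrak{w}_{\ell}^{(t)}(t;\ell,m) = \mathfrak{w}_{\ell}(t;\ell,m) = \frac{q-1}{q}\left(\mu_t(\ell,m) - (-1)^t q^{\binom{t}{2}}{\ell\brack t}_q \right).$$
   Context: $q$ is a prime power. $\mu_t(\ell,m)$ is the number of $\ell\times m$ matrices over $\mathbb{F}_q$ of rank exactly $t$. For an $\ell\times m$ matrix $M=(m_{ij})$ and $1\le r\le\ell$, $\tau_r(M)=m_{11}+\cdots+m_{rr}$ and $\underline{M}_r$ is the matrix of its first $r$ rows. $\mathfrak w_r(t;\ell,m)$ is the number of $\ell\times m$ matrices $M$ over $\mathbb{F}_q$ with $\mathrm{rk}(M)=t$ and $\tau_r(M)\ne0$, and $\mathfrak w^{(s)}_r(t;\ell,m)$ is the number of those that additionally satisfy $\mathrm{rk}(\underline{M}_r)=s$. ${n\brack k}_q$ is the Gaussian binomial coefficient. *)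

theory Defs
  imports "Jordan_Normal_Form.DL_Rank_Submatrix"
begin

definition mrank :: "'a::field mat \<Rightarrow> nat" where
  "mrank A = vec_space.rank (dim_row A) A"

(* tau_r(M) = m_11 + ... + m_rr  (0-based indices in Isabelle) *)
definition tau :: "nat \<Rightarrow> 'a::field mat \<Rightarrow> 'a" where
  "tau r M = (\<Sum>i<r. M $$ (i, i))"

definition first_rows :: "nat \<Rightarrow> 'a::field mat \<Rightarrow> 'a mat" where
  "first_rows r M = mat r (dim_col M) (\<lambda>(i, j). M $$ (i, j))"

definition mu :: "'a::{finite,field} itself \<Rightarrow> nat \<Rightarrow> nat \<Rightarrow> nat \<Rightarrow> nat" where
  "mu _ t l m = card {M :: 'a mat. M \<in> carrier_mat l m \<and> mrank M = t}"

definition w :: "'a::{finite,field} itself \<Rightarrow> nat \<Rightarrow> nat \<Rightarrow> nat \<Rightarrow> nat \<Rightarrow> nat" where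
  "w _ r t l m = card {M :: 'a mat. M \<in> carrier_mat l m \<and> mrank M = t \<and> tau r M \<noteq> 0}"

definition ws :: "'a::{finite,field} itself \<Rightarrow> nat \<Rightarrow> nat \<Rightarrow> nat \<Rightarrow> nat \<Rightarrow> nat \<Rightarrow> nat" where
  "ws _ s r t l m = card {M :: 'a mat. M \<in> carrier_mat l m \<and> mrank M = t \<and> tau r M \<noteq> 0
                                  \<and> mrank (first_rows r M) = s}"

definition qbinom :: "real \<Rightarrow> nat \<Rightarrow> nat \<Rightarrow> real" where
  "qbinom q n k = (if k \<le> n then (\<Prod>i<k. (q ^ (n - i) - 1) / (q ^ (i + 1) - 1)) else 0)"

end

theory Submission
  imports Defs
begin

context vec_space begin

lemma span_cons:
  assumes c: "c \<in> carrier_vec n" and cs: "set cs \<subseteq> carrier_vec n"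
  shows "span (set (c#cs)) = {a \<cdot>\<^sub>v c + v | a v. v \<in> span (set cs)}"
proof -
  have s1: "span (set (c#cs)) = span_list (c#cs)" using span_list_as_span assms by simp
  have s2: "span (set cs) = span_list cs" using span_list_as_span assms by simp
  show ?thesis unfolding s1 s2
  proof (intro equalityI subsetI)
    fix x assume "x \<in> span_list (c#cs)"
    then obtain f where "x = lincomb_list f (c#cs)" by (auto simp: span_list_def)
    then show "x \<in> {a \<cdot>\<^sub>v c + v | a v. v \<in> span_list cs}"
      by (auto simp: span_list_def)
  next
    fix x assume "x \<in> {a \<cdot>\<^sub>v c + v | a v. v \<in> span_list cs}"
    then obtain a g where x: "x = a \<cdot>\<^sub>v c + lincomb_list g cs" by (auto simp: span_list_def)
    define f where "f = (\<lambda>i. if i = 0 then a else g (i - 1))"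
    have "f \<circ> Suc = g" by (auto simp: f_def)
    then have "x = lincomb_list f (c#cs)" using x by (simp add: f_def)
    then show "x \<in> span_list (c#cs)" by (auto simp: span_list_def)
  qed
qed

end

context vec_space begin

lemma span_cons_in:
  assumes c: "c \<in> carrier_vec n" and cs: "set cs \<subseteq> carrier_vec n" and ci: "c \<in> span (set cs)"
  shows "span (set (c#cs)) = span (set cs)"
proof -
  have "a \<cdot>\<^sub>v c + v \<in> span (set cs)" if "v \<in> span (set cs)" for a v
    using span_add1[OF cs smult_in_span[OF cs ci] that] by simp
  moreover have "v = 0 \<cdot>\<^sub>v c + v" if "v \<in> span (set cs)" for v
    using span_closed[OF cs that] c by auto
  ultimately show ?thesis unfolding span_cons[OF c cs] by blast
qed

lemma finite_carrier_vec_fin: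
  assumes "finite (UNIV :: 'a set)"
  shows "finite (carrier_vec k :: 'a vec set)"
proof -
  have "carrier_vec k \<subseteq> vec_of_list ` {xs :: 'a list. set xs \<subseteq> UNIV \<and> length xs = k}"
  proof
    fix v :: "'a vec" assume "v \<in> carrier_vec k"
    then show "v \<in> vec_of_list ` {xs. set xs \<subseteq> UNIV \<and> length xs = k}"
      by (intro image_eqI[of _ _ "list_of_vec v"]) (auto simp: vec_list)
  qed
  moreover have "finite {xs :: 'a list. set xs \<subseteq> UNIV \<and> length xs = k}"
    by (rule finite_lists_length_eq[OF assms])
  ultimately show ?thesis by (meson finite_imageI finite_subset)
qed

lemma card_span_cons_notin:
  assumes fin: "finite (UNIV :: 'a set)"
    and c: "c \<in> carrier_vec n" and cs: "set cs \<subseteq> carrier_vec n" and ci: "c \<notin> span (set cs)"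
  shows "card (span (set (c#cs))) = card (UNIV :: 'a set) * card (span (set cs))"
proof -
  let ?S = "span (set cs)"
  let ?f = "\<lambda>(a, v). a \<cdot>\<^sub>v c + v"
  have img: "span (set (c#cs)) = ?f ` (UNIV \<times> ?S)" unfolding span_cons[OF c cs] by auto
  have inj: "inj_on ?f (UNIV \<times> ?S)"
  proof (rule inj_onI, clarify)
    fix a v b u assume v: "v \<in> ?S" and u: "u \<in> ?S" and eq: "a \<cdot>\<^sub>v c + v = b \<cdot>\<^sub>v c + u"
    have vc: "v \<in> carrier_vec n" "u \<in> carrier_vec n" using v u span_closed[OF cs] by auto
    have ab: "a = b"
    proof (rule ccontr)
      assume ne: "a \<noteq> b"
      have "(a - b) \<cdot>\<^sub>v c = u - v"
      proof (rule eq_vecI)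
        fix i assume i: "i < dim_vec (u - v)"
        then have i': "i < n" using vc by simp
        have "(a \<cdot>\<^sub>v c + v) $ i = (b \<cdot>\<^sub>v c + u) $ i" using eq by (rule arg_cong)
        then show "((a - b) \<cdot>\<^sub>v c) $ i = (u - v) $ i" using i' vc c by (simp add: algebra_simps)
      qed (use vc c in auto)
      then have "inverse (a - b) \<cdot>\<^sub>v ((a - b) \<cdot>\<^sub>v c) = inverse (a - b) \<cdot>\<^sub>v (u - v)" by simp
      then have "c = inverse (a - b) \<cdot>\<^sub>v (u - v)"
        using ne c vc by (simp add: smult_smult_assoc)
      moreover have "u - v = u + (-1) \<cdot>\<^sub>v v" using vc by (intro eq_vecI) auto
      ultimately have "c = inverse (a - b) \<cdot>\<^sub>v (u + (-1) \<cdot>\<^sub>v v)" by simp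
      moreover have "u + (-1) \<cdot>\<^sub>v v \<in> ?S"
        using span_add1[OF cs u smult_in_span[OF cs v]] by simp
      ultimately show False using ci smult_in_span[OF cs] by metis
    qed
    have "v = u"
    proof (rule eq_vecI)
      fix i assume i: "i < dim_vec u"
      then have i': "i < n" using vc by simp
      have "(a \<cdot>\<^sub>v c + v) $ i = (b \<cdot>\<^sub>v c + u) $ i" using eq by (rule arg_cong)
      then show "v $ i = u $ i" using i' vc c ab by simp
    qed (use vc in auto)
    then show "a = b \<and> v = u" using ab by simp
  qed
  have finS: "finite ?S"
    using finite_subset[OF _ finite_carrier_vec_fin[OF fin]] span_closed[OF cs] by blast
  show ?thesis unfolding img card_image[OF inj] card_cartesian_product by simp
qed

end

context vec_space begin

definition rkl :: "'a vec list \<Rightarrow> nat" where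
  "rkl cs = vectorspace.dim class_ring (span_vs (set cs))"

lemma lin_indpt_empty: "lin_indpt {}"
  using lindep_span[of "{}"] by simp

lemma basis_exists:
  assumes "set cs \<subseteq> carrier_vec n"
  shows "\<exists>U. U \<subseteq> set cs \<and> lin_indpt U \<and> span U = span (set cs)"
  using assms
proof (induction cs)
  case Nil
  then show ?case using lin_indpt_empty by auto
next
  case (Cons c cs)
  then have c: "c \<in> carrier_vec n" and cs: "set cs \<subseteq> carrier_vec n" by auto
  from Cons.IH[OF cs] obtain U where U: "U \<subseteq> set cs" "lin_indpt U" "span U = span (set cs)" by blast
  show ?case
  proof (cases "c \<in> span (set cs)")
    case True
    then show ?thesis using U span_cons_in[OF c cs True] by auto
  next
    case False
    have Uc: "U \<subseteq> carrier_vec n" using U cs by auto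
    have cU: "c \<notin> U" using False U in_own_span[OF Uc] by auto
    have "\<not> lin_dep (U \<union> {c})"
      using lin_dep_iff_in_span[OF Uc U(2) c cU] False U(3) by simp
    then have li: "lin_indpt (insert c U)" by simp
    obtain us where us: "set us = U" using U(1) finite_list[of U] finite_subset by blast
    have usc: "set us \<subseteq> carrier_vec n" using us Uc by simp
    have "span (set (c#us)) = span (set (c#cs))"
      unfolding span_cons[OF c cs] span_cons[OF c usc] using us U(3) by simp
    then show ?thesis using li U us by (intro exI[of _ "insert c U"]) auto
  qed
qed

lemma dim_via_basis:
  assumes "U \<subseteq> carrier_vec n" "finite U" "lin_indpt U" "span U = span S"
  shows "vectorspace.dim class_ring (span_vs S) = card U"
proof -
  have "maximal U (\<lambda>T. T \<subseteq> U \<and> lin_indpt T)" using assms(3) unfolding maximal_def by auto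
  from dim_span[OF assms(1,2) this] have "vectorspace.dim class_ring (span_vs U) = card U" .
  then show ?thesis using assms(4) by simp
qed

lemma rkl_Nil: "rkl [] = 0"
  unfolding rkl_def using dim_via_basis[of "{}" "{}"] lin_indpt_empty by simp

lemma rkl_cons:
  assumes c: "c \<in> carrier_vec n" and cs: "set cs \<subseteq> carrier_vec n"
  shows "rkl (c#cs) = rkl cs + (if c \<in> span (set cs) then 0 else 1)"
proof (cases "c \<in> span (set cs)")
  case True
  then show ?thesis unfolding rkl_def using span_cons_in[OF c cs True] by simp
next
  case False
  from basis_exists[OF cs] obtain U where U: "U \<subseteq> set cs" "lin_indpt U" "span U = span (set cs)" by blast
  have Uc: "U \<subseteq> carrier_vec n" using U cs by auto
  have fU: "finite U" using U(1) finite_subset by blast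
  have cU: "c \<notin> U" using False U in_own_span[OF Uc] by auto
  have "\<not> lin_dep (U \<union> {c})"
    using lin_dep_iff_in_span[OF Uc U(2) c cU] False U(3) by simp
  then have li: "lin_indpt (insert c U)" by simp
  obtain us where us: "set us = U" using fU finite_list[of U] by blast
  have usc: "set us \<subseteq> carrier_vec n" using us Uc by simp
  have "span (set (c#us)) = span (set (c#cs))"
    unfolding span_cons[OF c cs] span_cons[OF c usc] using us U(3) by simp
  then have sp: "span (insert c U) = span (set (c#cs))" using us by simp
  have "rkl (c#cs) = card (insert c U)"
    unfolding rkl_def by (rule dim_via_basis) (use Uc c fU li sp in auto)
  moreover have "rkl cs = card U"
    unfolding rkl_def by (rule dim_via_basis) (use Uc fU U in auto)
  ultimately show ?thesis using False cU fU by simp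
qed

lemma card_span_rkl:
  assumes fin: "finite (UNIV :: 'a set)" and cs: "set cs \<subseteq> carrier_vec n"
  shows "card (span (set cs)) = card (UNIV :: 'a set) ^ rkl cs"
  using cs
proof (induction cs)
  case Nil
  then show ?case using span_empty rkl_Nil by simp
next
  case (Cons c cs)
  then have c: "c \<in> carrier_vec n" and cs: "set cs \<subseteq> carrier_vec n" by auto
  show ?case
  proof (cases "c \<in> span (set cs)")
    case True
    then show ?thesis using span_cons_in[OF c cs True] rkl_cons[OF c cs] Cons.IH[OF cs] by simp
  next
    case False
    then show ?thesis using card_span_cons_notin[OF fin c cs False] rkl_cons[OF c cs] Cons.IH[OF cs] by simp
  qed
qed

end

context vec_space begin

lemma span_zero_coord:
  assumes cs: "set cs \<subseteq> carrier_vec n" and i: "i < n" and z: "\<forall>v\<in>set cs. v $ i = 0"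
  shows "\<forall>x\<in>span (set cs). x $ i = 0"
  using cs z
proof (induction cs)
  case Nil
  then show ?case using span_empty i by simp
next
  case (Cons c cs)
  then have c: "c \<in> carrier_vec n" and css: "set cs \<subseteq> carrier_vec n" by auto
  show ?case
  proof
    fix x assume "x \<in> span (set (c#cs))"
    then obtain a v where x: "x = a \<cdot>\<^sub>v c + v" and v: "v \<in> span (set cs)"
      unfolding span_cons[OF c css] by blast
    have vc: "v \<in> carrier_vec n" using span_closed[OF css v] .
    have "v $ i = 0" using Cons.IH css Cons.prems v by auto
    then show "x $ i = 0" using x vc c i Cons.prems by simp
  qed
qed

lemma span_smult_map:
  assumes cs: "set cs \<subseteq> carrier_vec n" and a: "a \<noteq> 0"
  shows "span (set (map (\<lambda>v. a \<cdot>\<^sub>v v) cs)) = span (set cs)"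
  using cs
proof (induction cs)
  case Nil
  then show ?case by simp
next
  case (Cons c cs)
  then have c: "c \<in> carrier_vec n" and css: "set cs \<subseteq> carrier_vec n" by auto
  have css': "set (map (\<lambda>v. a \<cdot>\<^sub>v v) cs) \<subseteq> carrier_vec n" using css by auto
  have ac: "a \<cdot>\<^sub>v c \<in> carrier_vec n" using c by simp
  have "span (set (map (\<lambda>v. a \<cdot>\<^sub>v v) (c#cs))) = {b \<cdot>\<^sub>v (a \<cdot>\<^sub>v c) + v | b v. v \<in> span (set cs)}"
    using span_cons[OF ac css'] Cons.IH[OF css] by simp
  also have "\<dots> = {b \<cdot>\<^sub>v c + v | b v. v \<in> span (set cs)}"
  proof (intro equalityI subsetI)
    fix x assume "x \<in> {b \<cdot>\<^sub>v (a \<cdot>\<^sub>v c) + v | b v. v \<in> span (set cs)}"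
    then obtain b v where "x = b \<cdot>\<^sub>v (a \<cdot>\<^sub>v c) + v" "v \<in> span (set cs)" by blast
    then show "x \<in> {b \<cdot>\<^sub>v c + v | b v. v \<in> span (set cs)}"
      by (intro CollectI exI[of _ "b * a"] exI[of _ v]) (simp add: smult_smult_assoc)
  next
    fix x assume "x \<in> {b \<cdot>\<^sub>v c + v | b v. v \<in> span (set cs)}"
    then obtain b v where "x = b \<cdot>\<^sub>v c + v" "v \<in> span (set cs)" by blast
    moreover have "b \<cdot>\<^sub>v c = (b / a) \<cdot>\<^sub>v (a \<cdot>\<^sub>v c)" using a by (simp add: smult_smult_assoc)
    ultimately show "x \<in> {b \<cdot>\<^sub>v (a \<cdot>\<^sub>v c) + v | b v. v \<in> span (set cs)}"
      by (intro CollectI exI[of _ "b / a"] exI[of _ v]) simp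
  qed
  also have "\<dots> = span (set (c#cs))" using span_cons[OF c css] by simp
  finally show ?case .
qed

lemma rkl_smult_map:
  assumes cs: "set cs \<subseteq> carrier_vec n" and a: "a \<noteq> 0"
  shows "rkl (map (\<lambda>v. a \<cdot>\<^sub>v v) cs) = rkl cs"
  unfolding rkl_def using span_smult_map[OF assms] by simp

lemma rkl_replicate0: "rkl (replicate m (0\<^sub>v n)) = 0"
proof (induction m)
  case 0
  then show ?case using rkl_Nil by simp
next
  case (Suc m)
  have "0\<^sub>v n \<in> span (set (replicate m (0\<^sub>v n)))" by (rule vectorspace.span_zero[OF vectorspace_axioms, simplified])
  moreover have "set (replicate m (0\<^sub>v n)) \<subseteq> carrier_vec n" by (auto simp: set_replicate_conv_if)
  ultimately show ?case using rkl_cons[of "0\<^sub>v n" "replicate m (0\<^sub>v n)"] Suc by simp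
qed

end

locale fvs = vec_space f_ty n for f_ty :: "'a::{finite,field} itself" and n
begin

definition Vk :: "nat \<Rightarrow> 'a vec set" where
  "Vk k = {v \<in> carrier_vec n. \<forall>i. k \<le> i \<longrightarrow> i < n \<longrightarrow> v $ i = 0}"

definition Xs :: "nat \<Rightarrow> nat \<Rightarrow> 'a vec list set" where
  "Xs k m = {cs. length cs = m \<and> set cs \<subseteq> Vk k}"

definition taur :: "nat \<Rightarrow> 'a vec list \<Rightarrow> 'a" where
  "taur k cs = (\<Sum>j<k. (cs ! j) $ (k - 1 - j))"

definition ee :: "'a \<Rightarrow> real" where
  "ee x = (if x = 0 then 1 else if x = 1 then -1 else 0)"

definition DD :: "nat \<Rightarrow> nat \<Rightarrow> nat \<Rightarrow> real" where
  "DD k m t = (\<Sum>cs\<in>Xs k m. if rkl cs = t then ee (taur k cs) else 0)"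

lemma finite_carrier: "finite (carrier_vec k :: 'a vec set)"
  using finite_carrier_vec_fin by simp

lemma finite_Vk: "finite (Vk k)"
  unfolding Vk_def using finite_carrier by simp

lemma finite_Xs: "finite (Xs k m)"
proof -
  have "Xs k m \<subseteq> {cs. set cs \<subseteq> Vk k \<and> length cs = m}" unfolding Xs_def by auto
  moreover have "finite {cs. set cs \<subseteq> Vk k \<and> length cs = m}"
    by (rule finite_lists_length_eq[OF finite_Vk])
  ultimately show ?thesis using finite_subset by blast
qed

lemma Vk_carrier: "Vk k \<subseteq> carrier_vec n" unfolding Vk_def by auto

lemma Xs_carrier: "cs \<in> Xs k m \<Longrightarrow> set cs \<subseteq> carrier_vec n"
  unfolding Xs_def using Vk_carrier by auto

lemma Vk0: "Vk 0 = {0\<^sub>v n}"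
  unfolding Vk_def by (auto intro!: eq_vecI)

lemma Xs0: "Xs 0 m = {replicate m (0\<^sub>v n)}"
  unfolding Xs_def Vk0 by (auto intro!: replicate_length_same[symmetric])

lemma DD0: "DD 0 m t = (if t = 0 then 1 else 0)"
  unfolding DD_def Xs0 using rkl_replicate0 by (simp add: taur_def ee_def)

end

context fvs begin

lemma ee_split: "ee x = of_bool (x = 0) - of_bool (x = 1)"
  unfolding ee_def by auto

lemma sum_ee:
  assumes "finite S"
  shows "(\<Sum>c\<in>S. ee (g c)) = real (card {c\<in>S. g c = 0}) - real (card {c\<in>S. g c = 1})"
proof -
  have "(\<Sum>c\<in>S. ee (g c)) = (\<Sum>c\<in>S. of_bool (g c = 0)) - (\<Sum>c\<in>S. (of_bool (g c = 1) :: real))"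
    unfolding ee_split by (simp add: sum_subtractf)
  also have "\<dots> = real (card (S \<inter> {c. g c = 0})) - real (card (S \<inter> {c. g c = 1}))"
    using assms by simp
  also have "S \<inter> {c. g c = 0} = {c\<in>S. g c = 0}" by auto
  also have "S \<inter> {c. g c = 1} = {c\<in>S. g c = 1}" by auto
  finally show ?thesis .
qed

lemma vec_add_cancel1:
  fixes x ww :: "'a vec"
  assumes "x \<in> carrier_vec n" "ww \<in> carrier_vec n"
  shows "(x + ww) + (-1) \<cdot>\<^sub>v ww = x" "(x + (-1) \<cdot>\<^sub>v ww) + ww = x"
  using assms by (auto intro!: eq_vecI simp: mult_minus1)

lemma sum_ee_uniform:
  assumes S: "finite S" "S \<subseteq> carrier_vec n" and ww: "ww \<in> carrier_vec n" "ww $ i = 1" and i: "i < n"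
    and cl: "\<And>c y. c \<in> S \<Longrightarrow> c + y \<cdot>\<^sub>v ww \<in> S"
  shows "(\<Sum>c\<in>S. ee (c $ i + tt)) = 0"
proof -
  let ?A = "{c\<in>S. c $ i + tt = 0}" and ?B = "{c\<in>S. c $ i + tt = 1}"
  have "bij_betw (\<lambda>c. c + ww) ?A ?B"
  proof (rule bij_betw_byWitness[where f' = "\<lambda>c. c + (-1) \<cdot>\<^sub>v ww"])
    show "\<forall>a\<in>?A. (a + ww) + (-1) \<cdot>\<^sub>v ww = a" using S ww by (blast intro: vec_add_cancel1)
    show "\<forall>a\<in>?B. (a + (-1) \<cdot>\<^sub>v ww) + ww = a" using S ww by (blast intro: vec_add_cancel1)
    show "(\<lambda>c. c + ww) ` ?A \<subseteq> ?B"
    proof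
      fix x assume "x \<in> (\<lambda>c. c + ww) ` ?A"
      then obtain c where c: "c \<in> S" "c $ i + tt = 0" "x = c + ww" by blast
      have "c + 1 \<cdot>\<^sub>v ww \<in> S" using cl[OF c(1)] .
      moreover have "c + 1 \<cdot>\<^sub>v ww = c + ww" using ww by simp
      moreover have "(c + ww) $ i = c $ i + 1" using ww i by simp
      ultimately show "x \<in> ?B" using c by (simp add: algebra_simps)
    qed
    show "(\<lambda>c. c + (-1) \<cdot>\<^sub>v ww) ` ?B \<subseteq> ?A"
    proof
      fix x assume "x \<in> (\<lambda>c. c + (-1) \<cdot>\<^sub>v ww) ` ?B"
      then obtain c where c: "c \<in> S" "c $ i + tt = 1" "x = c + (-1) \<cdot>\<^sub>v ww" by blast
      have cc: "c \<in> carrier_vec n" using c S by auto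
      have h: "(c + (-1) \<cdot>\<^sub>v ww) $ i = c $ i - 1" using ww i cc by simp
      have "(c + (-1) \<cdot>\<^sub>v ww) $ i + tt = (c $ i + tt) - 1" unfolding h by (simp add: algebra_simps)
      also have "\<dots> = 0" using c(2) by simp
      finally show "x \<in> ?A" using c cl[OF c(1)] by simp
    qed
  qed
  then have "card ?A = card ?B" by (rule bij_betw_same_card)
  then show ?thesis using sum_ee[OF S(1)] by simp
qed

lemma taur_cons: "taur (Suc k) (c#r) = c $ k + taur k r"
  unfolding taur_def by (subst sum.lessThan_Suc_shift) simp

lemma Xs_Suc: "Xs k (Suc m) = (\<lambda>(c, r). c # r) ` (Vk k \<times> Xs k m)"
proof (intro equalityI subsetI)
  fix x assume "x \<in> Xs k (Suc m)"
  then obtain c r where "x = c # r" "c \<in> Vk k" "r \<in> Xs k m"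
    unfolding Xs_def by (cases x) auto
  then show "x \<in> (\<lambda>(c, r). c # r) ` (Vk k \<times> Xs k m)" by auto
qed (auto simp: Xs_def)

lemma DD_split:
  "DD k (Suc m) t = (\<Sum>r\<in>Xs k m. \<Sum>c\<in>Vk k. if rkl (c#r) = t then ee (taur k (c#r)) else 0)"
proof -
  have inj: "inj_on (\<lambda>(c, r). c # r) (Vk k \<times> Xs k m)" by (auto simp: inj_on_def)
  have "DD k (Suc m) t = (\<Sum>(c, r)\<in>Vk k \<times> Xs k m. if rkl (c#r) = t then ee (taur k (c#r)) else 0)"
    unfolding DD_def Xs_Suc by (subst sum.reindex[OF inj]) (simp add: case_prod_unfold)
  also have "\<dots> = (\<Sum>c\<in>Vk k. \<Sum>r\<in>Xs k m. if rkl (c#r) = t then ee (taur k (c#r)) else 0)"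
    by (rule sum.cartesian_product[symmetric])
  also have "\<dots> = (\<Sum>r\<in>Xs k m. \<Sum>c\<in>Vk k. if rkl (c#r) = t then ee (taur k (c#r)) else 0)"
    by (rule sum.swap)
  finally show ?thesis .
qed

end

context fvs begin

lemma span_sub_Vk:
  assumes r: "set r \<subseteq> Vk k"
  shows "span (set r) \<subseteq> Vk k"
proof
  fix x assume x: "x \<in> span (set r)"
  have rc: "set r \<subseteq> carrier_vec n" using r Vk_carrier by auto
  have "x \<in> carrier_vec n" using span_closed[OF rc x] .
  moreover have "x $ i = 0" if "k \<le> i" "i < n" for i
    using span_zero_coord[OF rc \<open>i < n\<close>] r that x unfolding Vk_def by auto
  ultimately show "x \<in> Vk k" unfolding Vk_def by auto
qed

lemma inner_sum:
  assumes r: "r \<in> Xs (Suc k) m" and kn: "Suc k \<le> n"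
  shows "(\<Sum>c\<in>Vk (Suc k). if rkl (c#r) = t then ee (c $ k + tt) else 0)
    = (of_bool (rkl r = t) - of_bool (rkl r + 1 = t)) *
      (if (\<forall>v\<in>set r. v $ k = 0) then real (card (UNIV :: 'a set)) ^ rkl r * ee tt else 0)"
proof -
  let ?V = "Vk (Suc k)" and ?W = "span (set r)"
  have rV: "set r \<subseteq> ?V" using r unfolding Xs_def by auto
  have rc: "set r \<subseteq> carrier_vec n" using r Xs_carrier by auto
  have WV: "?W \<subseteq> ?V" using span_sub_Vk[OF rV] .
  have fV: "finite ?V" by (rule finite_Vk)
  have fW: "finite ?W" using finite_subset[OF WV fV] .
  have kn': "k < n" using kn by simp
  let ?g = "\<lambda>c. ee (c $ k + tt)"
  have SV: "(\<Sum>c\<in>?V. ?g c) = 0"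
  proof (rule sum_ee_uniform[OF fV Vk_carrier])
    show "unit_vec n k \<in> carrier_vec n" by simp
    show "unit_vec n k $ k = 1" using kn' by simp
    show "k < n" by fact
    fix c y assume c: "c \<in> ?V"
    then have cc: "c \<in> carrier_vec n" using Vk_carrier by auto
    show "c + y \<cdot>\<^sub>v unit_vec n k \<in> ?V"
      using c cc unfolding Vk_def by auto
  qed
  have SW: "(\<Sum>c\<in>?W. ?g c) = (if (\<forall>v\<in>set r. v $ k = 0) then real (card (UNIV :: 'a set)) ^ rkl r * ee tt else 0)"
  proof (cases "\<forall>v\<in>set r. v $ k = 0")
    case True
    have "\<forall>x\<in>?W. x $ k = 0" using span_zero_coord[OF rc kn' True] .
    then have "(\<Sum>c\<in>?W. ?g c) = (\<Sum>c\<in>?W. ee tt)" by simp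
    also have "\<dots> = real (card ?W) * ee tt" by simp
    also have "card ?W = card (UNIV :: 'a set) ^ rkl r" using card_span_rkl[OF _ rc] by simp
    finally show ?thesis using True by simp
  next
    case False
    then obtain v where v: "v \<in> set r" "v $ k \<noteq> 0" by blast
    let ?u = "inverse (v $ k) \<cdot>\<^sub>v v"
    have vc: "v \<in> carrier_vec n" using v rc by auto
    have uW: "?u \<in> ?W" using smult_in_span[OF rc span_mem[OF rc v(1)]] .
    have "(\<Sum>c\<in>?W. ?g c) = 0"
    proof (rule sum_ee_uniform[OF fW])
      show "?W \<subseteq> carrier_vec n" using span_closed[OF rc] by blast
      show "?u \<in> carrier_vec n" using vc by simp
      show "?u $ k = 1" using vc kn' v(2) by simp
      show "k < n" by fact
      fix c y assume c: "c \<in> ?W"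
      show "c + y \<cdot>\<^sub>v ?u \<in> ?W"
        using span_add1[OF rc c smult_in_span[OF rc uW]] by simp
    qed
    then show ?thesis using False by auto
  qed
  have "(\<Sum>c\<in>?V. if rkl (c#r) = t then ?g c else 0)
      = (\<Sum>c\<in>?V - ?W. if rkl (c#r) = t then ?g c else 0) + (\<Sum>c\<in>?W. if rkl (c#r) = t then ?g c else 0)"
    by (rule sum.subset_diff[OF WV fV])
  also have "(\<Sum>c\<in>?W. if rkl (c#r) = t then ?g c else 0) = of_bool (rkl r = t) * (\<Sum>c\<in>?W. ?g c)"
  proof -
    have "(\<Sum>c\<in>?W. if rkl (c#r) = t then ?g c else 0) = (\<Sum>c\<in>?W. of_bool (rkl r = t) * ?g c)"
    proof (rule sum.cong[OF refl])
      fix c assume c: "c \<in> ?W"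
      have "c \<in> carrier_vec n" using span_closed[OF rc c] .
      then have "rkl (c#r) = rkl r" using rkl_cons[OF _ rc] c by simp
      then show "(if rkl (c#r) = t then ?g c else 0) = of_bool (rkl r = t) * ?g c" by simp
    qed
    then show ?thesis by (simp add: sum_distrib_left)
  qed
  also have "(\<Sum>c\<in>?V - ?W. if rkl (c#r) = t then ?g c else 0) = of_bool (rkl r + 1 = t) * (\<Sum>c\<in>?V - ?W. ?g c)"
  proof -
    have "(\<Sum>c\<in>?V - ?W. if rkl (c#r) = t then ?g c else 0) = (\<Sum>c\<in>?V - ?W. of_bool (rkl r + 1 = t) * ?g c)"
    proof (rule sum.cong[OF refl])
      fix c assume c: "c \<in> ?V - ?W"
      have "c \<in> carrier_vec n" using c Vk_carrier by auto
      then have "rkl (c#r) = rkl r + 1" using rkl_cons[OF _ rc] c by simp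
      then show "(if rkl (c#r) = t then ?g c else 0) = of_bool (rkl r + 1 = t) * ?g c" by simp
    qed
    then show ?thesis by (simp add: sum_distrib_left)
  qed
  also have "(\<Sum>c\<in>?V - ?W. ?g c) = (\<Sum>c\<in>?V. ?g c) - (\<Sum>c\<in>?W. ?g c)"
    by (rule sum_diff[OF fV WV])
  finally show ?thesis unfolding SV SW by (simp add: algebra_simps)
qed

lemma Xs_filter:
  assumes kn: "Suc k \<le> n"
  shows "{r\<in>Xs (Suc k) m. \<forall>v\<in>set r. v $ k = 0} = Xs k m"
  using kn unfolding Xs_def Vk_def
  apply (auto simp: le_Suc_eq)
  subgoal premises prems for x xa i
  proof (cases "i = k")
    case True
    then show ?thesis using prems by auto
  next
    case False
    then have "Suc k \<le> i" using prems by simp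
    then show ?thesis using prems by auto
  qed
  done

lemma DD_rec:
  assumes kn: "Suc k \<le> n"
  shows "DD (Suc k) (Suc m) t = real (card (UNIV :: 'a set)) ^ t * DD k m t
           - (if 1 \<le> t then real (card (UNIV :: 'a set)) ^ (t - 1) * DD k m (t - 1) else 0)"
proof -
  let ?q = "real (card (UNIV :: 'a set))"
  let ?h = "\<lambda>r. (of_bool (rkl r = t) - of_bool (rkl r + 1 = t)) * (?q ^ rkl r * ee (taur k r))"
  have "DD (Suc k) (Suc m) t = (\<Sum>r\<in>Xs (Suc k) m. \<Sum>c\<in>Vk (Suc k). if rkl (c#r) = t then ee (c $ k + taur k r) else 0)"
    unfolding DD_split taur_cons ..
  also have "\<dots> = (\<Sum>r\<in>Xs (Suc k) m. if (\<forall>v\<in>set r. v $ k = 0) then ?h r else 0)"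
    by (rule sum.cong[OF refl], subst inner_sum[OF _ kn]) auto
  also have "\<dots> = (\<Sum>r\<in>{r\<in>Xs (Suc k) m. \<forall>v\<in>set r. v $ k = 0}. ?h r)"
    by (rule sum.inter_filter[OF finite_Xs, symmetric])
  also have "\<dots> = (\<Sum>r\<in>Xs k m. ?h r)" unfolding Xs_filter[OF kn] ..
  also have "\<dots> = (\<Sum>r\<in>Xs k m. ?q ^ t * (if rkl r = t then ee (taur k r) else 0)
           - (if 1 \<le> t then ?q ^ (t - 1) * (if rkl r = t - 1 then ee (taur k r) else 0) else 0))"
    by (rule sum.cong[OF refl]) auto
  also have "\<dots> = ?q ^ t * DD k m t - (if 1 \<le> t then ?q ^ (t - 1) * DD k m (t - 1) else 0)"
    unfolding DD_def by (simp add: sum_subtractf sum_distrib_left)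
  finally show ?thesis .
qed

end

definition Pq :: "real \<Rightarrow> nat \<Rightarrow> nat \<Rightarrow> real" where
  "Pq q k t = (\<Prod>i<t. q ^ (k - i) - 1)"
definition Qq :: "real \<Rightarrow> nat \<Rightarrow> real" where
  "Qq q t = (\<Prod>i<t. q ^ (i + 1) - 1)"

lemma Pq_zero: "k < t \<Longrightarrow> Pq q k t = 0"
  unfolding Pq_def by (rule prod_zero) (auto intro!: bexI[of _ k])

lemma qbinom_PQ: "qbinom q k t = Pq q k t / Qq q t"
proof (cases "t \<le> k")
  case True
  then show ?thesis unfolding qbinom_def Pq_def Qq_def by (simp add: prod_dividef)
next
  case False
  then show ?thesis unfolding qbinom_def using Pq_zero[of k t q] by simp
qed

lemma Qq_nz: assumes "q > 1" shows "Qq q t \<noteq> 0"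
proof -
  have "q ^ (i + 1) - 1 \<noteq> 0" for i
  proof -
    have "1 < q ^ (i + 1)" using assms by (rule one_less_power) simp
    then show ?thesis by simp
  qed
  then show ?thesis unfolding Qq_def by (simp add: prod_zero_iff)
qed

lemma qbinom_pascal:
  assumes q: "q > 1"
  shows "qbinom q (Suc k) (Suc t) = qbinom q k t + q ^ Suc t * qbinom q k (Suc t)"
proof -
  have P1: "Pq q (Suc k) (Suc t) = (q ^ Suc k - 1) * Pq q k t"
    unfolding Pq_def by (subst prod.lessThan_Suc_shift) simp
  have P2: "Pq q k (Suc t) = Pq q k t * (q ^ (k - t) - 1)"
    unfolding Pq_def by simp
  have Q1: "Qq q (Suc t) = Qq q t * (q ^ Suc t - 1)"
    unfolding Qq_def by simp
  have Qn: "Qq q t \<noteq> 0" using Qq_nz[OF q] .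
  have qn: "q ^ Suc t - 1 \<noteq> 0" using one_less_power[OF q, of "Suc t"] by simp
  have key: "(q ^ Suc k - 1) * Pq q k t = Pq q k t * (q ^ Suc t - 1) + q ^ Suc t * (Pq q k t * (q ^ (k - t) - 1))"
  proof (cases "t \<le> k")
    case True
    then have "q ^ Suc t * q ^ (k - t) = q ^ Suc k" by (simp flip: power_add)
    then show ?thesis by (simp add: algebra_simps) metis
  next
    case False
    then show ?thesis using Pq_zero[of k t q] by simp
  qed
  let ?P = "Pq q k t" and ?Q = "Qq q t" and ?y = "q ^ Suc t - 1" and ?x = "q ^ (k - t) - 1"
  have "?P / ?Q + q ^ Suc t * (?P * ?x / (?Q * ?y)) = (?P * ?y + q ^ Suc t * (?P * ?x)) / (?Q * ?y)"
    using Qn qn by (simp add: field_simps)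
  also have "\<dots> = (q ^ Suc k - 1) * ?P / (?Q * ?y)" unfolding key ..
  finally show ?thesis unfolding qbinom_PQ P1 P2 Q1 by simp
qed

lemma qbinom_0: "qbinom q k 0 = 1" unfolding qbinom_def by simp
lemma qbinom_0_Suc: "qbinom q 0 (Suc t) = 0" unfolding qbinom_def by simp

lemma choose2_Suc: "Suc t choose 2 = (t choose 2) + t"
  using binomial_Suc_Suc[of t 1] by (simp add: numeral_2_eq_2)

context fvs begin

lemma DD_formula:
  assumes "k \<le> m" "k \<le> n"
  shows "DD k m t = (-1) ^ t * real (card (UNIV :: 'a set)) ^ (t choose 2)
                     * qbinom (real (card (UNIV :: 'a set))) k t"
  using assms
proof (induction k arbitrary: m t)
  case 0
  have "(0::nat) choose 2 = 0" by simp
  then show ?case using DD0 by (cases t) (auto simp: qbinom_0 qbinom_0_Suc binomial_eq_0)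
next
  case (Suc k)
  let ?q = "real (card (UNIV :: 'a set))"
  have q1: "?q > 1"
  proof -
    have "(0::'a) \<noteq> 1" by simp
    then have "card {0::'a, 1} \<le> card (UNIV :: 'a set)" by (intro card_mono) auto
    then show ?thesis by simp
  qed
  obtain m' where m: "m = Suc m'" using Suc.prems by (cases m) auto
  have IH: "\<And>t. DD k m' t = (-1) ^ t * ?q ^ (t choose 2) * qbinom ?q k t"
    using Suc.IH Suc.prems m by simp
  show ?case
  proof (cases t)
    case 0
    then show ?thesis unfolding m DD_rec[OF Suc.prems(2)] using IH by (simp add: qbinom_0)
  next
    case (Suc t')
    note tt = this
    show ?thesis unfolding tt m DD_rec[OF Suc.prems(2)] IH qbinom_pascal[OF q1] choose2_Suc
      by (simp add: algebra_simps power_add)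
  qed
qed

end

lemma card_fibers:
  assumes A: "finite A" and B: "finite B"
  shows "card {x\<in>A. P x \<and> f x \<in> B} = (\<Sum>a\<in>B. card {x\<in>A. P x \<and> f x = a})"
proof -
  have "{x\<in>A. P x \<and> f x \<in> B} = (\<Union>a\<in>B. {x\<in>A. P x \<and> f x = a})" by auto
  moreover have "card (\<Union>a\<in>B. {x\<in>A. P x \<and> f x = a}) = (\<Sum>a\<in>B. card {x\<in>A. P x \<and> f x = a})"
    by (rule card_UN_disjoint) (use A B in auto)
  ultimately show ?thesis by simp
qed

context fvs begin

definition NN :: "nat \<Rightarrow> nat \<Rightarrow> 'a \<Rightarrow> nat" where
  "NN m t a = card {cs\<in>Xs n m. rkl cs = t \<and> taur n cs = a}"

lemma DD_NN: "DD n m t = real (NN m t 0) - real (NN m t 1)"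
proof -
  have "DD n m t = (\<Sum>cs\<in>{cs\<in>Xs n m. rkl cs = t}. ee (taur n cs))"
    unfolding DD_def by (rule sum.inter_filter[OF finite_Xs, symmetric])
  also have "\<dots> = real (card {c\<in>{cs\<in>Xs n m. rkl cs = t}. taur n c = 0})
                 - real (card {c\<in>{cs\<in>Xs n m. rkl cs = t}. taur n c = 1})"
    by (rule sum_ee) (use finite_Xs in simp)
  also have "{c\<in>{cs\<in>Xs n m. rkl cs = t}. taur n c = 0} = {cs\<in>Xs n m. rkl cs = t \<and> taur n cs = 0}" by auto
  also have "{c\<in>{cs\<in>Xs n m. rkl cs = t}. taur n c = 1} = {cs\<in>Xs n m. rkl cs = t \<and> taur n cs = 1}" by auto
  finally show ?thesis unfolding NN_def .
qed

lemma Vk_smult: "v \<in> Vk k \<Longrightarrow> a \<cdot>\<^sub>v v \<in> Vk k"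
  unfolding Vk_def by auto

lemma taur_smult:
  assumes cs: "cs \<in> Xs n m" and nm: "n \<le> m"
  shows "taur n (map (\<lambda>v. a \<cdot>\<^sub>v v) cs) = a * taur n cs"
proof -
  have "taur n (map (\<lambda>v. a \<cdot>\<^sub>v v) cs) = (\<Sum>j<n. a * ((cs ! j) $ (n - 1 - j)))"
    unfolding taur_def
  proof (rule sum.cong[OF refl])
    fix j assume j: "j \<in> {..<n}"
    then have jl: "j < length cs" using cs nm unfolding Xs_def by auto
    then have "cs ! j \<in> carrier_vec n" using Xs_carrier[OF cs] nth_mem by blast
    moreover have "n - 1 - j < n" using j by auto
    ultimately show "map (\<lambda>v. a \<cdot>\<^sub>v v) cs ! j $ (n - 1 - j) = a * (cs ! j $ (n - 1 - j))"
      using jl by simp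
  qed
  then show ?thesis unfolding taur_def by (simp add: sum_distrib_left)
qed

lemma map_smult_Xs: "cs \<in> Xs k m \<Longrightarrow> map (\<lambda>v. a \<cdot>\<^sub>v v) cs \<in> Xs k m"
  unfolding Xs_def using Vk_smult by auto

lemma map_smult_inv:
  assumes cs: "cs \<in> Xs k m" and a: "a \<noteq> 0"
  shows "map (\<lambda>v. inverse a \<cdot>\<^sub>v v) (map (\<lambda>v. a \<cdot>\<^sub>v v) cs) = cs"
proof -
  have "inverse a \<cdot>\<^sub>v (a \<cdot>\<^sub>v v) = v" if "v \<in> set cs" for v
    using a by (simp add: smult_smult_assoc)
  then show ?thesis by (simp add: map_idI)
qed

lemma NN_scale:
  assumes a: "a \<noteq> 0" and nm: "n \<le> m"
  shows "NN m t a = NN m t 1"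
proof -
  let ?A = "{cs\<in>Xs n m. rkl cs = t \<and> taur n cs = 1}" and ?B = "{cs\<in>Xs n m. rkl cs = t \<and> taur n cs = a}"
  have ia: "inverse a \<noteq> 0" using a by simp
  have "bij_betw (map (\<lambda>v. a \<cdot>\<^sub>v v)) ?A ?B"
  proof (rule bij_betw_byWitness[where f' = "map (\<lambda>v. inverse a \<cdot>\<^sub>v v)"])
    show "\<forall>x\<in>?A. map (\<lambda>v. inverse a \<cdot>\<^sub>v v) (map (\<lambda>v. a \<cdot>\<^sub>v v) x) = x"
      using map_smult_inv a by auto
    show "\<forall>y\<in>?B. map (\<lambda>v. a \<cdot>\<^sub>v v) (map (\<lambda>v. inverse a \<cdot>\<^sub>v v) y) = y"
      using map_smult_inv[OF _ ia] a by auto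
    show "map (\<lambda>v. a \<cdot>\<^sub>v v) ` ?A \<subseteq> ?B"
      using map_smult_Xs taur_smult[OF _ nm] rkl_smult_map[OF Xs_carrier a] by auto
    show "map (\<lambda>v. inverse a \<cdot>\<^sub>v v) ` ?B \<subseteq> ?A"
      using map_smult_Xs taur_smult[OF _ nm] rkl_smult_map[OF Xs_carrier ia] a by auto
  qed
  then show ?thesis unfolding NN_def by (simp add: bij_betw_same_card)
qed

lemma main_count:
  assumes nm: "n \<le> m"
  defines "q \<equiv> real (card (UNIV :: 'a set))"
  shows "real (card {cs\<in>Xs n m. rkl cs = t \<and> taur n cs \<noteq> 0})
       = (q - 1) / q * (real (card {cs\<in>Xs n m. rkl cs = t}) - (-1) ^ t * q ^ (t choose 2) * qbinom q n t)"
proof -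
  have fU: "finite (UNIV :: 'a set)" by simp
  have cardU0: "card (UNIV - {0::'a}) = card (UNIV :: 'a set) - 1" by (simp add: card_Diff_singleton)
  have q1: "card (UNIV :: 'a set) \<ge> 1" by (simp add: Suc_leI finite_UNIV_card_ge_0)
  have S1: "(\<Sum>a\<in>UNIV - {0::'a}. NN m t a) = (card (UNIV :: 'a set) - 1) * NN m t 1"
  proof -
    have "(\<Sum>a\<in>UNIV - {0::'a}. NN m t a) = (\<Sum>a\<in>UNIV - {0::'a}. NN m t 1)"
      by (rule sum.cong[OF refl]) (rule NN_scale[OF _ nm], simp)
    then show ?thesis using cardU0 by simp
  qed
  have w': "card {cs\<in>Xs n m. rkl cs = t \<and> taur n cs \<noteq> 0} = (card (UNIV :: 'a set) - 1) * NN m t 1"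
  proof -
    have "card {cs\<in>Xs n m. rkl cs = t \<and> taur n cs \<noteq> 0} = card {cs\<in>Xs n m. rkl cs = t \<and> taur n cs \<in> UNIV - {0}}"
      by simp
    also have "\<dots> = (\<Sum>a\<in>UNIV - {0::'a}. NN m t a)"
      unfolding NN_def by (rule card_fibers[OF finite_Xs]) simp
    finally show ?thesis using S1 by simp
  qed
  have mu': "card {cs\<in>Xs n m. rkl cs = t} = NN m t 0 + (card (UNIV :: 'a set) - 1) * NN m t 1"
  proof -
    have "card {cs\<in>Xs n m. rkl cs = t} = card {cs\<in>Xs n m. rkl cs = t \<and> taur n cs \<in> UNIV}"
      by simp
    also have "\<dots> = (\<Sum>a\<in>UNIV. NN m t a)"
      unfolding NN_def by (rule card_fibers[OF finite_Xs]) simp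
    also have "\<dots> = NN m t 0 + (\<Sum>a\<in>UNIV - {0::'a}. NN m t a)"
      by (rule sum.remove) auto
    finally show ?thesis using S1 by simp
  qed
  have D: "(-1) ^ t * q ^ (t choose 2) * qbinom q n t = real (NN m t 0) - real (NN m t 1)"
    using DD_formula[OF nm order_refl, of t] DD_NN unfolding q_def by simp
  have qpos: "q > 0" unfolding q_def using q1 by simp
  have qq: "real (card (UNIV :: 'a set) - 1) = q - 1" unfolding q_def using q1 by (simp add: of_nat_diff)
  show ?thesis unfolding D w' mu' of_nat_add of_nat_mult qq using qpos
    by (simp add: field_simps)
qed

end

lemma card_bij_filter:
  assumes "bij_betw f A B"
  shows "card {x\<in>A. P (f x)} = card {y\<in>B. P y}"
proof -
  have "bij_betw f {x\<in>A. P (f x)} {y\<in>B. P y}"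
    using assms unfolding bij_betw_def inj_on_def by auto
  then show ?thesis by (rule bij_betw_same_card)
qed

definition phi :: "nat \<Rightarrow> 'a mat \<Rightarrow> 'a vec list" where
  "phi l M = rev (take l (cols M)) @ drop l (cols M)"

lemma rev_take_invol:
  assumes "l \<le> length xs"
  shows "rev (take l (rev (take l xs) @ drop l xs)) @ drop l (rev (take l xs) @ drop l xs) = xs"
  using assms by simp

lemma set_rev_take: "set (rev (take l xs) @ drop l xs) = set xs"
  by (metis append_take_drop_id set_append set_rev)

lemma Vk_full: "(fvs.Vk l l :: 'a::{finite,field} vec set) = carrier_vec l"
  unfolding fvs.Vk_def by auto

lemma phi_bij:
  assumes lm: "l \<le> m"
  shows "bij_betw (phi l) (carrier_mat l m) (fvs.Xs l l m :: 'a::{finite,field} vec list set)"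
proof (rule bij_betw_byWitness[where f' = "\<lambda>cs. mat_of_cols l (rev (take l cs) @ drop l cs)"])
  show "\<forall>M\<in>carrier_mat l m. mat_of_cols l (rev (take l (phi l M)) @ drop l (phi l M)) = (M :: 'a mat)"
  proof
    fix M :: "'a mat" assume M: "M \<in> carrier_mat l m"
    have "rev (take l (phi l M)) @ drop l (phi l M) = cols M"
      unfolding phi_def by (rule rev_take_invol) (use M lm in simp)
    then show "mat_of_cols l (rev (take l (phi l M)) @ drop l (phi l M)) = M"
      using M mat_of_cols_cols[of M] by simp
  qed
  show "\<forall>cs\<in>(fvs.Xs l l m :: 'a vec list set). phi l (mat_of_cols l (rev (take l cs) @ drop l cs)) = cs"
  proof
    fix cs assume cs: "cs \<in> (fvs.Xs l l m :: 'a vec list set)"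
    then have len: "length cs = m" and sc: "set cs \<subseteq> carrier_vec l"
      unfolding fvs.Xs_def Vk_full by auto
    have "set (rev (take l cs) @ drop l cs) \<subseteq> carrier_vec l" using sc set_rev_take by metis
    then show "phi l (mat_of_cols l (rev (take l cs) @ drop l cs)) = cs"
      unfolding phi_def using rev_take_invol[of l cs] len lm by simp
  qed
  show "phi l ` carrier_mat l m \<subseteq> (fvs.Xs l l m :: 'a vec list set)"
  proof
    fix x assume "x \<in> phi l ` (carrier_mat l m :: 'a mat set)"
    then obtain M :: "'a mat" where M: "M \<in> carrier_mat l m" "x = phi l M" by blast
    have "set x = set (cols M)" unfolding M(2) phi_def by (rule set_rev_take)
    then have "set x \<subseteq> carrier_vec l" using cols_dim[of M] M(1) by auto
    moreover have "length x = m" using M lm unfolding phi_def by auto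
    ultimately show "x \<in> (fvs.Xs l l m :: 'a vec list set)" unfolding fvs.Xs_def Vk_full by auto
  qed
  show "(\<lambda>cs. mat_of_cols l (rev (take l cs) @ drop l cs)) ` (fvs.Xs l l m :: 'a vec list set) \<subseteq> carrier_mat l m"
    unfolding fvs.Xs_def using lm by auto
qed

lemma mrank_phi:
  assumes "M \<in> carrier_mat l m"
  shows "mrank M = vec_space.rkl l (phi l (M :: 'a::{finite,field} mat))"
  unfolding mrank_def vec_space.rank_def vec_space.rkl_def phi_def set_rev_take using assms by simp

lemma tau_phi:
  assumes M: "M \<in> carrier_mat l m" and lm: "l \<le> m"
  shows "tau l M = fvs.taur l (phi l (M :: 'a::{finite,field} mat))"
proof -
  have "fvs.taur l (phi l M) = (\<Sum>j<l. M $$ (l - Suc j, l - Suc j))"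
    unfolding fvs.taur_def
  proof (rule sum.cong[OF refl])
    fix j assume j: "j \<in> {..<l}"
    have lc: "length (cols M) = m" using M by simp
    have "phi l M ! j = rev (take l (cols M)) ! j"
      unfolding phi_def using j lc lm by (simp add: nth_append)
    also have "\<dots> = cols M ! (l - Suc j)" using j lc lm by (simp add: rev_nth)
    also have "\<dots> = col M (l - Suc j)" using j M lm by simp
    finally show "phi l M ! j $ (l - 1 - j) = M $$ (l - Suc j, l - Suc j)"
      using j M lm by simp
  qed
  also have "\<dots> = (\<Sum>i<l. M $$ (i, i))" by (rule sum.nat_diff_reindex)
  finally show ?thesis unfolding tau_def by simp
qed

lemma first_rows_id: "M \<in> carrier_mat l m \<Longrightarrow> first_rows l M = M"
  unfolding first_rows_def by (auto intro!: eq_matI)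

theorem mainTheorem15:
  fixes s t l m :: nat and q :: real
  assumes "q = real (card (UNIV :: ('a::{finite,field}) set))"
    and "1 \<le> t" and "t \<le> l" and "l \<le> m" and "1 \<le> s" and "s \<le> t"
  shows "(s \<noteq> t \<longrightarrow> ws TYPE('a) s l t l m = 0)
       \<and> ws TYPE('a) t l t l m = w TYPE('a) l t l m
       \<and> real (w TYPE('a) l t l m)
           = (q - 1) / q * (real (mu TYPE('a) t l m) - (-1) ^ t * q ^ (t choose 2) * qbinom q l t)"
proof -
  interpret F: fvs "TYPE('a)" l .
  have lm: "l \<le> m" by fact
  have bij: "bij_betw (phi l) (carrier_mat l m) (F.Xs l m :: 'a vec list set)"
    using phi_bij[OF lm] .
  have wset: "w TYPE('a) l t l m = card {cs\<in>F.Xs l m. F.rkl cs = t \<and> F.taur l cs \<noteq> 0}"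
  proof -
    have "{M :: 'a mat. M \<in> carrier_mat l m \<and> mrank M = t \<and> tau l M \<noteq> 0}
        = {M \<in> carrier_mat l m. (\<lambda>cs. F.rkl cs = t \<and> F.taur l cs \<noteq> 0) (phi l M)}"
    proof (rule Collect_cong)
      fix M :: "'a mat"
      show "(M \<in> carrier_mat l m \<and> mrank M = t \<and> tau l M \<noteq> 0) = (M \<in> carrier_mat l m \<and> (F.rkl (phi l M) = t \<and> F.taur l (phi l M) \<noteq> 0))"
        using mrank_phi[of M l m] tau_phi[OF _ lm, of M] by auto
    qed
    then show ?thesis unfolding w_def using card_bij_filter[OF bij] by simp
  qed
  have muset: "mu TYPE('a) t l m = card {cs\<in>F.Xs l m. F.rkl cs = t}"
  proof -
    have "{M :: 'a mat. M \<in> carrier_mat l m \<and> mrank M = t}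
        = {M \<in> carrier_mat l m. (\<lambda>cs. F.rkl cs = t) (phi l M)}"
      using mrank_phi by auto
    then show ?thesis unfolding mu_def using card_bij_filter[OF bij] by simp
  qed
  have wsset: "ws TYPE('a) s' l t l m = card {M :: 'a mat. M \<in> carrier_mat l m \<and> mrank M = t \<and> tau l M \<noteq> 0 \<and> mrank M = s'}" for s'
  proof -
    have "{M :: 'a mat. M \<in> carrier_mat l m \<and> mrank M = t \<and> tau l M \<noteq> 0 \<and> mrank (first_rows l M) = s'}
        = {M :: 'a mat. M \<in> carrier_mat l m \<and> mrank M = t \<and> tau l M \<noteq> 0 \<and> mrank M = s'}"
    proof (rule Collect_cong)
      fix M :: "'a mat"
      show "(M \<in> carrier_mat l m \<and> mrank M = t \<and> tau l M \<noteq> 0 \<and> mrank (first_rows l M) = s') =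
            (M \<in> carrier_mat l m \<and> mrank M = t \<and> tau l M \<noteq> 0 \<and> mrank M = s')"
        using first_rows_id[of M l m] by auto
    qed
    then show ?thesis unfolding ws_def by simp
  qed
  have c1: "s \<noteq> t \<longrightarrow> ws TYPE('a) s l t l m = 0"
  proof
    assume st: "s \<noteq> t"
    have "{M :: 'a mat. M \<in> carrier_mat l m \<and> mrank M = t \<and> tau l M \<noteq> 0 \<and> mrank M = s} = {}"
      using st by auto
    then show "ws TYPE('a) s l t l m = 0" unfolding wsset by (simp only: card.empty)
  qed
  have c2: "ws TYPE('a) t l t l m = w TYPE('a) l t l m"
    unfolding wsset w_def by (metis (no_types, lifting))
  have c3: "real (w TYPE('a) l t l m)
           = (q - 1) / q * (real (mu TYPE('a) t l m) - (-1) ^ t * q ^ (t choose 2) * qbinom q l t)"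
    unfolding wset muset assms(1) by (rule F.main_count[OF lm])
  show ?thesis using c1 c2 c3 by blast
qed

end
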